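(* Let $F$ be a Fano manifold and let $\lambda$ be an eigenvalue of $(c_1(F)\star_0)$ on $H^{(0)}$ of multiplicity one. Then $\lambda$ is not an eigenvalue of $(c_1(F)\star_0)$ on $H^{(j)}$ for any $j\neq0$.
   Context: $\star_0$ is the small quantum product on the full cohomology $H^\bullet(F,\mathbb C)$ (supercommutative, with Poincaré pairing $(\cdot,\cdot)$ satisfying the Frobenius property). $H^{(j)}=\bigoplus_{p-q=j}H^{p,q}(F)$; each $H^{(j)}$ is preserved by $(c_1(F)\star_0)$ and $H^{(j)}\star_0H^{(k)}\subset H^{(j+k)}$. *)

theory Defs
  imports Main Complex_Main
begin

text \<open>The cohomology H is a complex vector space
  (carrier type 'v, scalar multiplication sc); mult is the small quantum product,
  one its unit, pair the Poincare pairing, Hj j the subspace H^(j), and c the class c_1(F).\<close>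

definition fin_dim_cvs :: "(complex \<Rightarrow> 'v::ab_group_add \<Rightarrow> 'v) \<Rightarrow> bool" where
  "fin_dim_cvs sc \<longleftrightarrow> vector_space sc \<and> (\<exists>B. finite B \<and> module.span sc B = UNIV)"

definition bilinear_map :: "(complex \<Rightarrow> 'v::ab_group_add \<Rightarrow> 'v) \<Rightarrow> ('v \<Rightarrow> 'v \<Rightarrow> 'v) \<Rightarrow> bool" where
  "bilinear_map sc m \<longleftrightarrow>
     (\<forall>x y z. m (x + y) z = m x z + m y z \<and> m x (y + z) = m x y + m x z) \<and>
     (\<forall>a x y. m (sc a x) y = sc a (m x y) \<and> m x (sc a y) = sc a (m x y))"

definition bilinear_form :: "(complex \<Rightarrow> 'v::ab_group_add \<Rightarrow> 'v) \<Rightarrow> ('v \<Rightarrow> 'v \<Rightarrow> complex) \<Rightarrow> bool" where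
  "bilinear_form sc p \<longleftrightarrow>
     (\<forall>x y z. p (x + y) z = p x z + p y z \<and> p x (y + z) = p x y + p x z) \<and>
     (\<forall>a x y. p (sc a x) y = a * p x y \<and> p x (sc a y) = a * p x y)"

definition direct_sum_decomp :: "(complex \<Rightarrow> 'v::ab_group_add \<Rightarrow> 'v) \<Rightarrow> (int \<Rightarrow> 'v set) \<Rightarrow> bool" where
  "direct_sum_decomp sc Hj \<longleftrightarrow>
     (\<forall>j. module.subspace sc (Hj j)) \<and>
     (\<forall>v. \<exists>!comp. (\<forall>j. comp j \<in> Hj j) \<and> finite {j. comp j \<noteq> 0} \<and>
                    v = sum comp {j. comp j \<noteq> 0})"

text \<open>All structural properties of (H^\<bullet>(F,C), star_0, ( , ), H^(j), c_1(F)) used in the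
  statement: finite-dimensional complex vector space, associative unital bilinear product,
  supercommutativity (an element of H^(j) has cohomological parity j mod 2, since p-q and p+q
  have the same parity), nondegenerate Poincare pairing with the Frobenius property,
  pairing H^(j) x H^(k) -> 0 unless j+k=0, grading H^(j) star H^(k) in H^(j+k),
  unit and c_1(F) lying in H^(0) = H^(1,1)-containing part.\<close>
definition qcoh_data ::
  "(complex \<Rightarrow> 'v::ab_group_add \<Rightarrow> 'v) \<Rightarrow> ('v \<Rightarrow> 'v \<Rightarrow> 'v) \<Rightarrow> 'v \<Rightarrow>
   ('v \<Rightarrow> 'v \<Rightarrow> complex) \<Rightarrow> (int \<Rightarrow> 'v set) \<Rightarrow> 'v \<Rightarrow> bool" where
  "qcoh_data sc mult one pair Hj c \<longleftrightarrow>
     fin_dim_cvs sc \<and>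
     bilinear_map sc mult \<and>
     (\<forall>x y z. mult (mult x y) z = mult x (mult y z)) \<and>
     (\<forall>x. mult one x = x \<and> mult x one = x) \<and>
     direct_sum_decomp sc Hj \<and>
     (\<forall>j k x y. x \<in> Hj j \<longrightarrow> y \<in> Hj k \<longrightarrow> mult x y = sc ((-1) ^ nat \<bar>j * k\<bar>) (mult y x)) \<and>
     (\<forall>j k x y. x \<in> Hj j \<longrightarrow> y \<in> Hj k \<longrightarrow> mult x y \<in> Hj (j + k)) \<and>
     bilinear_form sc pair \<and>
     (\<forall>x. (\<forall>y. pair x y = 0) \<longrightarrow> x = 0) \<and>
     (\<forall>y. (\<forall>x. pair x y = 0) \<longrightarrow> y = 0) \<and>
     (\<forall>x y z. pair (mult x y) z = pair x (mult y z)) \<and>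
     (\<forall>j k x y. x \<in> Hj j \<longrightarrow> y \<in> Hj k \<longrightarrow> j + k \<noteq> 0 \<longrightarrow> pair x y = 0) \<and>
     one \<in> Hj 0 \<and> c \<in> Hj 0"

definition qmul_op :: "('v \<Rightarrow> 'v \<Rightarrow> 'v) \<Rightarrow> 'v \<Rightarrow> 'v \<Rightarrow> 'v" where
  "qmul_op mult c = (\<lambda>v. mult c v)"

definition is_eigenvalue_on ::
  "(complex \<Rightarrow> 'v::ab_group_add \<Rightarrow> 'v) \<Rightarrow> ('v \<Rightarrow> 'v) \<Rightarrow> 'v set \<Rightarrow> complex \<Rightarrow> bool" where
  "is_eigenvalue_on sc L W lam \<longleftrightarrow> (\<exists>v \<in> W. v \<noteq> 0 \<and> L v = sc lam v)"

definition eig_multiplicity ::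
  "(complex \<Rightarrow> 'v::ab_group_add \<Rightarrow> 'v) \<Rightarrow> ('v \<Rightarrow> 'v) \<Rightarrow> 'v set \<Rightarrow> complex \<Rightarrow> nat" where
  "eig_multiplicity sc L W lam =
     vector_space.dim sc {v \<in> W. \<exists>k. ((\<lambda>w. L w - sc lam w) ^^ k) v = 0}"

end

theory Submission
  imports Defs "HOL-Computational_Algebra.Polynomial"
begin

lemma monom_X_pow: "monom (1::'a::comm_ring_1) i = [:0,1:]^i"
  by (induction i) (simp_all add: monom_0 monom_Suc one_pCons)

locale QC =
  fixes sc :: "complex \<Rightarrow> 'v::ab_group_add \<Rightarrow> 'v"
    and mult :: "'v \<Rightarrow> 'v \<Rightarrow> 'v" and one :: 'v
    and pair :: "'v \<Rightarrow> 'v \<Rightarrow> complex" and Hj :: "int \<Rightarrow> 'v set"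
    and c :: 'v
  assumes qd: "qcoh_data sc mult one pair Hj c"
begin

lemma q_fd: "fin_dim_cvs sc" using qd unfolding qcoh_data_def by (elim conjE)
lemma q_bm: "bilinear_map sc mult" using qd unfolding qcoh_data_def by (elim conjE)
lemma q_as: "\<forall>x y z. mult (mult x y) z = mult x (mult y z)" using qd unfolding qcoh_data_def by (elim conjE)
lemma q_one: "\<forall>x. mult one x = x \<and> mult x one = x" using qd unfolding qcoh_data_def by (elim conjE)
lemma dsd: "direct_sum_decomp sc Hj" using qd unfolding qcoh_data_def by (elim conjE)
lemma q_sc: "\<forall>j k x y. x \<in> Hj j \<longrightarrow> y \<in> Hj k \<longrightarrow> mult x y = sc ((-1) ^ nat \<bar>j * k\<bar>) (mult y x)"
  using qd unfolding qcoh_data_def by (elim conjE)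
lemma q_gr: "\<forall>j k x y. x \<in> Hj j \<longrightarrow> y \<in> Hj k \<longrightarrow> mult x y \<in> Hj (j + k)"
  using qd unfolding qcoh_data_def by (elim conjE)
lemma q_bf: "bilinear_form sc pair" using qd unfolding qcoh_data_def by (elim conjE)
lemma pnondeg_all: "\<forall>x. (\<forall>y. pair x y = 0) \<longrightarrow> x = 0"
  using qd unfolding qcoh_data_def by (elim conjE)
lemma q_fr: "\<forall>x y z. pair (mult x y) z = pair x (mult y z)" using qd unfolding qcoh_data_def by (elim conjE)
lemma q_pg: "\<forall>j k x y. x \<in> Hj j \<longrightarrow> y \<in> Hj k \<longrightarrow> j + k \<noteq> 0 \<longrightarrow> pair x y = 0"
  using qd unfolding qcoh_data_def by (elim conjE)
lemma one0: "one \<in> Hj 0" using qd unfolding qcoh_data_def by (elim conjE)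
lemma c0: "c \<in> Hj 0" using qd unfolding qcoh_data_def by (elim conjE)

lemma vs: "vector_space sc" using q_fd unfolding fin_dim_cvs_def by (elim conjE)

sublocale V: vector_space sc by (rule vs)

lemma finB: "\<exists>B. finite B \<and> V.span B = UNIV" using q_fd unfolding fin_dim_cvs_def by (elim conjE)

lemma madd1: "mult (x + y) z = mult x z + mult y z"
  and madd2: "mult x (y + z) = mult x y + mult x z"
  and msc1: "mult (sc a x) y = sc a (mult x y)"
  and msc2: "mult x (sc a y) = sc a (mult x y)"
  using q_bm unfolding bilinear_map_def by blast+

lemma massoc: "mult (mult x y) z = mult x (mult y z)"
  using q_as by blast
lemma mone1: "mult one x = x" and mone2: "mult x one = x"
  using q_one by blast+

lemma mzero1[simp]: "mult 0 x = 0"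
proof -
  have "mult 0 x = mult 0 x + mult 0 x" using madd1[of 0 0 x] by simp
  then show ?thesis by simp
qed

lemma mzero2[simp]: "mult x 0 = 0"
proof -
  have "mult x 0 = mult x 0 + mult x 0" using madd2[of x 0 0] by simp
  then show ?thesis by simp
qed

lemma mminus1: "mult (- x) y = - mult x y"
proof -
  have "mult x y + mult (-x) y = 0" using madd1[of x "-x" y] by simp
  then show ?thesis using minus_unique by metis
qed

lemma mdiff1: "mult (x - y) z = mult x z - mult y z"
  using madd1[of x "-y" z] mminus1 by simp

lemma mdiff2: "mult x (y - z) = mult x y - mult x z"
proof -
  have "mult x (y - z) + mult x z = mult x y" using madd2[of x "y - z" z] by simp
  then show ?thesis by (simp add: eq_diff_eq)
qed

lemma pbil: "pair (x + y) z = pair x z + pair y z" "pair x (y + z) = pair x y + pair x z"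
  using q_bf unfolding bilinear_form_def by blast+

lemma pzero2[simp]: "pair x 0 = 0"
proof -
  have "pair x 0 = pair x 0 + pair x 0" using pbil(2)[of x 0 0] by simp
  then show ?thesis by simp
qed

lemma psum: "finite S \<Longrightarrow> pair x (sum f S) = (\<Sum>i\<in>S. pair x (f i))"
  by (induction S rule: finite_induct) (simp_all add: pbil)

lemma pnondeg: "x \<noteq> 0 \<Longrightarrow> \<exists>y. pair x y \<noteq> 0" using pnondeg_all by blast

lemma pfrob: "pair (mult x y) z = pair x (mult y z)" using q_fr by blast

lemma pgrad: "x \<in> Hj j \<Longrightarrow> y \<in> Hj k \<Longrightarrow> j + k \<noteq> 0 \<Longrightarrow> pair x y = 0"
  using q_pg by blast

lemma Hsub: "V.subspace (Hj j)" using dsd by (simp add: direct_sum_decomp_def)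

lemma H0[simp]: "0 \<in> Hj j" using Hsub V.subspace_0 by blast
lemma Hadd: "x \<in> Hj j \<Longrightarrow> y \<in> Hj j \<Longrightarrow> x + y \<in> Hj j" using Hsub V.subspace_add by blast
lemma Hsc: "x \<in> Hj j \<Longrightarrow> sc a x \<in> Hj j" using Hsub V.subspace_scale by blast
lemma Hneg: "x \<in> Hj j \<Longrightarrow> - x \<in> Hj j" using Hsub V.subspace_neg by blast
lemma Hdiff: "x \<in> Hj j \<Longrightarrow> y \<in> Hj j \<Longrightarrow> x - y \<in> Hj j" using Hsub V.subspace_diff by blast

lemma Hmul: "x \<in> Hj j \<Longrightarrow> y \<in> Hj k \<Longrightarrow> mult x y \<in> Hj (j + k)"
  using q_gr by blast

lemma comm0: "x \<in> Hj 0 \<Longrightarrow> y \<in> Hj k \<Longrightarrow> mult x y = mult y x"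
proof -
  assume "x \<in> Hj 0" "y \<in> Hj k"
  then have "mult x y = sc ((-1) ^ nat \<bar>0 * k\<bar>) (mult y x)" using q_sc by blast
  then show ?thesis by simp
qed

definition peval :: "'v \<Rightarrow> complex poly \<Rightarrow> 'v" where
  "peval x p = fold_coeffs (\<lambda>a acc. sc a one + mult x acc) p 0"

lemma peval_0[simp]: "peval x 0 = 0" by (simp add: peval_def)

lemma peval_pCons[simp]: "peval x (pCons a p) = sc a one + mult x (peval x p)"
proof (cases "p = 0 \<and> a = 0")
  case True then show ?thesis by (simp add: peval_def)
next
  case False
  then show ?thesis
    by (cases "p = 0") (simp_all add: peval_def)
qed

lemma peval_add: "peval x (p + q) = peval x p + peval x q"
proof (induction p arbitrary: q rule: pCons_induct)
  case 0 then show ?case by simp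
next
  case (pCons a p)
  show ?case
  proof (cases q rule: pCons_cases)
    case (pCons b q')
    have "peval x (p + q') = peval x p + peval x q'" by (rule pCons.IH)
    then show ?thesis using pCons by (simp add: madd2 V.scale_left_distrib add_ac)
  qed
qed

lemma peval_smult: "peval x (smult a p) = sc a (peval x p)"
  by (induction p rule: pCons_induct) (simp_all add: V.scale_right_distrib msc2 V.scale_scale)

lemma peval_mult: "peval x (p * q) = mult (peval x p) (peval x q)"
proof (induction p rule: pCons_induct)
  case 0 then show ?case by simp
next
  case (pCons a p)
  have "peval x (pCons a p * q) = sc a (peval x q) + mult x (peval x (p * q))"
    by (simp add: peval_add peval_smult)
  also have "\<dots> = mult (peval x (pCons a p)) (peval x q)"
    using pCons.IH by (simp add: madd1 msc1 mone1 massoc)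
  finally show ?case .
qed

lemma peval_one[simp]: "peval x 1 = one" by (simp add: one_pCons)

lemma peval_X[simp]: "peval x [:0,1:] = x" by (simp add: mone2)

lemma peval_diff: "peval x (p - q) = peval x p - peval x q"
proof -
  have "peval x (p - q) + peval x q = peval x p" using peval_add[of x "p - q" q] by simp
  then show ?thesis by (simp add: eq_diff_eq)
qed

lemma peval_sum: "finite S \<Longrightarrow> peval x (sum f S) = (\<Sum>i\<in>S. peval x (f i))"
  by (induction S rule: finite_induct) (simp_all add: peval_add)

lemma peval_pow: "peval x (p ^ k) = (mult (peval x p) ^^ k) one"
  by (induction k) (simp_all add: peval_mult)

lemma peval_H0:
  assumes xH: "x \<in> Hj 0" shows "peval x p \<in> Hj 0"
proof (induction p rule: pCons_induct)
  case 0 then show ?case by simp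
next
  case (pCons a p)
  have "mult x (peval x p) \<in> Hj (0 + 0)" by (rule Hmul[OF xH pCons.IH])
  then have "mult x (peval x p) \<in> Hj 0" by simp
  moreover have "sc a one \<in> Hj 0" by (rule Hsc[OF one0])
  ultimately show ?case by (simp add: Hadd)
qed

lemma iter_peval: "(mult x ^^ k) y = mult (peval x (monom 1 k)) y"
  by (induction k) (simp_all add: monom_0 monom_Suc mone1 massoc)

lemma grades_indep:
  assumes fin: "finite I" and inj: "inj_on g I" and zH: "\<forall>i\<in>I. z i \<in> Hj (g i)"
    and s0: "sum z I = 0"
  shows "\<forall>i\<in>I. z i = 0"
proof -
  define comp where "comp d = (if d \<in> g ` I then z (the_inv_into I g d) else 0)" for d
  have cg: "comp (g i) = z i" if "i \<in> I" for i
    using that inj by (simp add: comp_def the_inv_into_f_f)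
  have cH: "\<forall>d. comp d \<in> Hj d"
  proof
    fix d show "comp d \<in> Hj d"
    proof (cases "d \<in> g ` I")
      case True then obtain i where "i \<in> I" "d = g i" by blast
      then show ?thesis using cg zH by simp
    qed (simp add: comp_def)
  qed
  have sub: "{d. comp d \<noteq> 0} \<subseteq> g ` I" by (auto simp: comp_def split: if_splits)
  have cfin: "finite {d. comp d \<noteq> 0}" using sub fin finite_subset by blast
  have "sum comp {d. comp d \<noteq> 0} = sum comp (g ` I)"
    by (rule sum.mono_neutral_left) (use sub fin in auto)
  also have "\<dots> = sum (comp \<circ> g) I" by (rule sum.reindex[OF inj])
  also have "\<dots> = sum z I" by (rule sum.cong) (simp_all add: cg)
  finally have cs: "0 = sum comp {d. comp d \<noteq> 0}" using s0 by simp
  have P1: "(\<forall>j. comp j \<in> Hj j) \<and> finite {j. comp j \<noteq> 0} \<and> (0::'v) = sum comp {j. comp j \<noteq> 0}"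
    using cH cfin cs by (intro conjI)
  have P2: "(\<forall>j. (\<lambda>_. 0::'v) j \<in> Hj j) \<and> finite {j. (\<lambda>_. 0::'v) j \<noteq> 0} \<and> (0::'v) = sum (\<lambda>_. 0::'v) {j. (\<lambda>_. 0::'v) j \<noteq> 0}"
    by simp
  from dsd have ex: "\<exists>!comp. (\<forall>j. comp j \<in> Hj j) \<and> finite {j. comp j \<noteq> 0} \<and> (0::'v) = sum comp {j. comp j \<noteq> 0}"
    unfolding direct_sum_decomp_def by (elim conjE allE)
  from ex obtain f where f: "\<And>y. (\<forall>j. y j \<in> Hj j) \<and> finite {j. y j \<noteq> 0} \<and> (0::'v) = sum y {j. y j \<noteq> 0} \<Longrightarrow> y = f"
    by (elim ex1E) blast
  have "comp = (\<lambda>_. 0)" using f[OF P1] f[OF P2] by simp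
  then show ?thesis using cg by simp
qed

lemma main:
  assumes ev: "is_eigenvalue_on sc (qmul_op mult c) (Hj 0) lam"
    and mu: "eig_multiplicity sc (qmul_op mult c) (Hj 0) lam = 1"
    and j0: "j \<noteq> 0" and vH: "v \<in> Hj j" and v0: "v \<noteq> 0" and vev: "mult c v = sc lam v"
  shows False
proof -
  define n where "n = c - sc lam one"
  have nH: "n \<in> Hj 0" using c0 one0 Hdiff Hsc n_def by auto
  have nmult: "mult n w = mult c w - sc lam w" for w by (simp add: n_def mdiff1 msc1 mone1)
  define K where "K = {x \<in> Hj 0. \<exists>k. (mult n ^^ k) x = 0}"
  have fK: "(\<lambda>w. qmul_op mult c w - sc lam w) = mult n" by (auto simp: qmul_op_def nmult)
  have dimK: "V.dim K = 1" using mu unfolding eig_multiplicity_def K_def fK .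
  obtain e0 where e0: "e0 \<in> Hj 0" "e0 \<noteq> 0" "mult n e0 = 0"
    using ev by (auto simp: is_eigenvalue_on_def qmul_op_def nmult)
  have nv: "mult n v = 0" using vev nmult by simp
  obtain y where y: "pair v y \<noteq> 0" using pnondeg v0 by blast
  obtain comp where comp: "\<forall>k. comp k \<in> Hj k" "finite {k. comp k \<noteq> 0}"
      "y = sum comp {k. comp k \<noteq> 0}"
    using dsd unfolding direct_sum_decomp_def by metis
  have "pair v y = (\<Sum>k\<in>{k. comp k \<noteq> 0}. pair v (comp k))" using comp psum by simp
  then obtain k where k: "pair v (comp k) \<noteq> 0" using y by (metis (mono_tags, lifting) sum.neutral)
  have kk: "j + k = 0" using pgrad[OF vH, of "comp k" k] comp(1) k by blast
  define w where "w = comp k"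
  have wH: "w \<in> Hj (-j)" using comp(1) kk w_def by (metis add.commute add_eq_0_iff)
  have pw: "pair v w \<noteq> 0" using k w_def by simp
  define u where "u = mult v w"
  have uH: "u \<in> Hj 0" using Hmul[OF vH wH] by (simp add: u_def)
  have "pair one u = pair v w" using pfrob[of one v w] by (simp add: mone1 u_def)
  then have u0: "u \<noteq> 0" using pw by auto
  have nu: "mult n u = 0" using nv by (simp add: u_def massoc[symmetric])
  obtain B where B: "finite B" "V.span B = UNIV" using finB by blast
  define D where "D = card B"
  define Z where "Z i = peval n (monom 1 i)" for i
  have "\<exists>P. P \<noteq> 0 \<and> peval n P = 0"
  proof (cases "inj_on Z {..D}")
    case False
    then obtain i k where ik: "i \<noteq> k" "Z i = Z k" unfolding inj_on_def by blast
    let ?P = "monom 1 i - monom (1::complex) k"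
    have "?P \<noteq> 0"
    proof
      assume "?P = 0"
      then have "coeff (monom (1::complex) i) i = coeff (monom 1 k) i" by simp
      then show False using ik(1) by simp
    qed
    moreover have "peval n ?P = 0" using ik(2) by (simp add: peval_diff Z_def)
    ultimately show ?thesis by blast
  next
    case True
    let ?S = "Z ` {..D}"
    have cS: "card ?S = D + 1" using card_image[OF True] by simp
    have "\<not> V.independent ?S"
    proof
      assume "V.independent ?S"
      from V.independent_span_bound[OF B(1) this] B(2) have "card ?S \<le> card B" by auto
      then show False using cS D_def by simp
    qed
    then obtain t where t: "\<exists>x\<in>?S. t x \<noteq> 0" "(\<Sum>x\<in>?S. sc (t x) x) = 0"
      using V.dependent_finite[of ?S] by auto
    define P where "P = (\<Sum>i\<le>D. monom (t (Z i)) i)"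
    have pm: "peval n (monom a i) = sc a (peval n (monom 1 i))" for a :: complex and i
    proof -
      have "monom a i = smult a (monom 1 i)" by (simp add: smult_monom)
      then show ?thesis by (simp only: peval_smult)
    qed
    have "peval n P = (\<Sum>i\<le>D. peval n (monom (t (Z i)) i))"
      unfolding P_def by (rule peval_sum) simp
    also have "\<dots> = (\<Sum>i\<le>D. sc (t (Z i)) (Z i))"
      by (rule sum.cong[OF refl]) (unfold Z_def, rule pm)
    also have "\<dots> = (\<Sum>x\<in>?S. sc (t x) x)" by (simp add: sum.reindex[OF True])
    also have "\<dots> = 0" by (rule t(2))
    finally have P1: "peval n P = 0" .
    obtain i where i: "i \<le> D" "t (Z i) \<noteq> 0" using t(1) by auto
    have "coeff P i = t (Z i)" unfolding P_def using i(1) by (rule coeff_sum_monom)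
    then have "P \<noteq> 0" using i(2) by auto
    then show ?thesis using P1 by blast
  qed
  then obtain P where P: "P \<noteq> 0" "peval n P = 0" by blast
  obtain Q where PQ: "P = [:-0,1:]^order 0 P * Q" "\<not> [:-0,1:] dvd Q"
    using order_decomp[OF P(1)] by blast
  have Q0: "poly Q 0 \<noteq> 0" using PQ(2) poly_eq_0_iff_dvd by metis
  define m where "m = order 0 P"
  define e where "e = peval n Q"
  have eH: "e \<in> Hj 0" using peval_H0 nH e_def by auto
  have epow: "(mult e ^^ k) one \<noteq> 0" for k
  proof
    assume h: "(mult e ^^ k) one = 0"
    obtain b R where bR: "Q^k = pCons b R" by (cases "Q^k" rule: pCons_cases)
    have "b = poly (Q^k) 0" using bR by simp
    hence b0: "b \<noteq> 0" using Q0 by simp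
    have "peval n (Q^k) = sc b one + mult n (peval n R)" using bR by simp
    moreover have "peval n (Q^k) = 0" using h by (simp add: peval_pow e_def)
    ultimately have eq: "sc b one = - mult n (peval n R)" by (simp add: eq_neg_iff_add_eq_0)
    have rH: "peval n R \<in> Hj 0" using peval_H0 nH by auto
    have "sc b e0 = mult (sc b one) e0" by (simp add: msc1 mone1)
    also have "\<dots> = - mult (mult n (peval n R)) e0" by (simp add: eq mminus1)
    also have "\<dots> = - mult (peval n R) (mult n e0)" using comm0[OF nH rH] massoc by metis
    also have "\<dots> = 0" using e0(3) by simp
    finally show False using b0 e0(2) by simp
  qed
  have ene: "e \<noteq> 0" using epow[of 1] by (simp add: mone2)
  have "(mult n ^^ m) e = peval n (monom 1 m * Q)" by (simp add: iter_peval peval_mult e_def)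
  also have "\<dots> = peval n P" using PQ(1) by (simp add: monom_X_pow m_def)
  finally have eK: "e \<in> K" using P(2) eH K_def by auto
  have uK: "u \<in> K" unfolding K_def using uH nu by (auto intro!: exI[of _ 1])
  obtain Bk where Bk: "Bk \<subseteq> K" "V.independent Bk" "K \<subseteq> V.span Bk" "card Bk = V.dim K"
    using V.basis_exists by blast
  then obtain b where "Bk = {b}" using dimK card_1_singleton_iff[of Bk] by auto
  then have "u \<in> range (\<lambda>a. sc a b)" "e \<in> range (\<lambda>a. sc a b)"
    using V.span_singleton uK eK Bk(3) by auto
  then obtain s t where st: "u = sc s b" "e = sc t b" by blast
  have t0: "t \<noteq> 0" using ene st by auto
  define a where "a = s / t"
  have ua: "u = sc a e" using t0 by (simp add: st V.scale_scale a_def)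
  have a0: "a \<noteq> 0" using u0 ua by auto
  have upow: "(mult u ^^ k) one = sc (a^k) ((mult e ^^ k) one)" for k
    by (induction k) (simp_all add: ua msc1 msc2 V.scale_scale)
  have U0: "(mult u ^^ k) one \<noteq> 0" for k using upow epow a0 by simp
  define X where "X k = ((\<lambda>z. mult z v) ^^ k) one" for k
  define Y where "Y k = (mult w ^^ k) one" for k
  have XH: "X k \<in> Hj (int k * j)" for k
  proof (induction k)
    case 0 then show ?case by (simp add: X_def one0)
  next
    case (Suc k)
    have "mult (X k) v \<in> Hj (int k * j + j)" using Hmul[OF Suc.IH vH] .
    then show ?case by (simp add: X_def algebra_simps)
  qed
  have YH: "Y k \<in> Hj (int k * (-j))" for k
  proof (induction k)
    case 0 then show ?case by (simp add: Y_def one0)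
  next
    case (Suc k)
    have "mult w (Y k) \<in> Hj (-j + int k * (-j))" using Hmul[OF wH Suc.IH] .
    then show ?case by (simp add: Y_def algebra_simps)
  qed
  have UH: "(mult u ^^ k) one \<in> Hj 0" for k
  proof (induction k)
    case 0 then show ?case by (simp add: one0)
  next
    case (Suc k)
    show ?case using Hmul[OF uH Suc.IH] by simp
  qed
  have XY: "mult (X k) (Y k) = (mult u ^^ k) one" for k
  proof (induction k)
    case 0 then show ?case by (simp add: X_def Y_def mone1)
  next
    case (Suc k)
    have "mult (X (Suc k)) (Y (Suc k)) = mult (mult (X k) v) (mult w (Y k))"
      by (simp add: X_def Y_def)
    also have "\<dots> = mult (X k) (mult u (Y k))" by (simp add: massoc u_def)
    also have "\<dots> = mult (X k) (mult (Y k) u)" using comm0[OF uH YH] by simp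
    also have "\<dots> = mult ((mult u ^^ k) one) u" by (simp add: massoc[symmetric] Suc.IH)
    also have "\<dots> = mult u ((mult u ^^ k) one)" using comm0[OF uH UH] by simp
    finally show ?case by simp
  qed
  have X0: "X k \<noteq> 0" for k using XY[of k] U0[of k] by (metis mzero1)
  have ginj: "inj_on (\<lambda>l::nat. int l * j) A" for A using j0 by (auto simp: inj_on_def)
  have injX: "inj_on X {..D}"
  proof (rule inj_onI)
    fix i k assume ik: "i \<in> {..D}" "k \<in> {..D}" "X i = X k"
    show "i = k"
    proof (rule ccontr)
      assume ne: "i \<noteq> k"
      let ?z = "\<lambda>l. if l = i then X i else - X k"
      have "\<forall>l\<in>{i,k}. ?z l = 0"
      proof (rule grades_indep[where g = "\<lambda>l. int l * j", OF _ ginj])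
        show "\<forall>l\<in>{i, k}. ?z l \<in> Hj (int l * j)" using XH Hneg ne by auto
        show "sum ?z {i, k} = 0" using ne ik(3) by simp
      qed simp
      then show False using X0[of i] by simp
    qed
  qed
  let ?S = "X ` {..D}"
  have "V.independent ?S"
  proof
    assume "V.dependent ?S"
    then obtain t where t: "\<exists>x\<in>?S. t x \<noteq> 0" "(\<Sum>x\<in>?S. sc (t x) x) = 0"
      using V.dependent_finite[of ?S] by auto
    have "(\<Sum>i\<le>D. sc (t (X i)) (X i)) = 0" using t(2) by (simp add: sum.reindex[OF injX])
    then have "\<forall>i\<in>{..D}. sc (t (X i)) (X i) = 0"
      by (intro grades_indep[where g = "\<lambda>l. int l * j", OF _ ginj]) (auto intro: Hsc XH)
    then show False using t(1) X0 by auto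
  qed
  from V.independent_span_bound[OF B(1) this] B(2) have "card ?S \<le> card B" by auto
  then show False using card_image[OF injX] D_def by simp
qed

end

theorem mainTheorem20:
  fixes sc :: "complex \<Rightarrow> 'v::ab_group_add \<Rightarrow> 'v"
    and mult :: "'v \<Rightarrow> 'v \<Rightarrow> 'v" and one :: 'v
    and pair :: "'v \<Rightarrow> 'v \<Rightarrow> complex" and Hj :: "int \<Rightarrow> 'v set"
    and c :: 'v and lam :: complex
  assumes "qcoh_data sc mult one pair Hj c"
    and "is_eigenvalue_on sc (qmul_op mult c) (Hj 0) lam"
    and "eig_multiplicity sc (qmul_op mult c) (Hj 0) lam = 1"
  shows "\<forall>j. j \<noteq> 0 \<longrightarrow> \<not> is_eigenvalue_on sc (qmul_op mult c) (Hj j) lam"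
proof (intro allI impI notI)
  fix j assume j: "j \<noteq> 0" "is_eigenvalue_on sc (qmul_op mult c) (Hj j) lam"
  then obtain v where v: "v \<in> Hj j" "v \<noteq> 0" "mult c v = sc lam v"
    by (auto simp: is_eigenvalue_on_def qmul_op_def)
  show False
    using QC.main[OF QC.intro[OF assms(1)] assms(2) assms(3) j(1) v] .
qed

end
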